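(* Let $\Sigma=(X,\mathcal D,\phi)$ be an RFC system. If there is a bounded uniformly globally weakly attractive set $\mathcal A\subset X$, then $\Sigma$ is Lagrange stable.
   Context: $\mathbb R_+=[0,\infty)$. A system is a triple $\Sigma=(X,\mathcal D,\phi)$ where $(X,\|\cdot\|)$ is a normed linear space; $D$ is a nonempty subset of some normed linear space; $\mathcal D$ is a set of functions $d:\mathbb R_+\to D$ closed under time shifts $d\mapsto d(\cdot+\tau)$, $\tau\ge0$, and under concatenation ($d(s)=d_1(s)$ for $s\in[0,t]$, $d(s)=d_2(s-t)$ for $s>t$, any $d_1,d_2\in\mathcal D$, $t>0$); and $\phi:\mathbb R_+\times X\times\mathcal D\to X$ is an everywhere defined map with $\phi(0,x,d)=x$; $\phi(t,x,d)=\phi(t,x,\tilde d)$ whenever $d=\tilde d$ on $[0,t]$; $t\mapsto\phi(t,x,d)$ continuous; and $\phi(h,\phi(t,x,d),d(t+\cdot))=\phi(t+h,x,d)$ for all $t,h\ge0$. $\|x\|_{\mathcal A}=\inf_{y\in\mathcal A}\|x-y\|$. $\mathcal K_\infty$: continuous strictly increasing unbounded $\gamma:\mathbb R_+\to\mathbb R_+$ with $\gamma(0)=0$. $\Sigma$ is RFC if for all $C,\tau>0$: $\sup\{\|\phi(t,x,d)\|:\|x\|\le C,d\in\mathcal D,t\in[0,\tau]\}<\infty$. $\mathcal A$ is uniformly globally weakly attractive if for all $\varepsilon,r>0$ there is $\tau$ such that for all $x$ with $\|x\|_{\mathcal A}\le r$ and all $d\in\mathcal D$ there exists $t\le\tau$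 with $\|\phi(t,x,d)\|_{\mathcal A}\le\varepsilon$. $\Sigma$ is Lagrange stable if there is a bounded set $\mathcal B\subset X$, $\sigma\in\mathcal K_\infty$ and $c>0$ with $\|\phi(t,x,d)\|_{\mathcal B}\le\sigma(\|x\|_{\mathcal B})+c$ for all $x\in X,t\ge0,d\in\mathcal D$ (equivalently, with $\mathcal B=\{0\}$). *)

theory Defs
  imports "HOL-Analysis.Analysis"
begin

text \<open>Time domain R_+ is modelled by real, only values at s \<ge> 0 matter.
  Inputs are functions real \<Rightarrow> 'd, the input value set is Dv, the input class is DD.\<close>

definition is_system ::
  "'d::real_normed_vector set \<Rightarrow> (real \<Rightarrow> 'd) set \<Rightarrow> (real \<Rightarrow> 'x::real_normed_vector \<Rightarrow> (real \<Rightarrow> 'd) \<Rightarrow> 'x) \<Rightarrow> bool"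
where
  "is_system Dv DD \<phi> \<longleftrightarrow>
     Dv \<noteq> {} \<and>
     (\<forall>d\<in>DD. \<forall>s\<ge>0. d s \<in> Dv) \<and>
     (\<forall>d\<in>DD. \<forall>\<tau>\<ge>0. (\<lambda>s. d (s + \<tau>)) \<in> DD) \<and>
     (\<forall>d1\<in>DD. \<forall>d2\<in>DD. \<forall>t>0. (\<lambda>s. if s \<le> t then d1 s else d2 (s - t)) \<in> DD) \<and>
     (\<forall>x d. \<phi> 0 x d = x) \<and>
     (\<forall>t\<ge>0. \<forall>x. \<forall>d\<in>DD. \<forall>d'\<in>DD. (\<forall>s\<in>{0..t}. d s = d' s) \<longrightarrow> \<phi> t x d = \<phi> t x d') \<and>
     (\<forall>x. \<forall>d\<in>DD. continuous_on {0..} (\<lambda>t. \<phi> t x d)) \<and>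
     (\<forall>x. \<forall>d\<in>DD. \<forall>t\<ge>0. \<forall>h\<ge>0. \<phi> h (\<phi> t x d) (\<lambda>s. d (t + s)) = \<phi> (t + h) x d)"

definition RFC :: "(real \<Rightarrow> 'd) set \<Rightarrow> (real \<Rightarrow> 'x::real_normed_vector \<Rightarrow> (real \<Rightarrow> 'd) \<Rightarrow> 'x) \<Rightarrow> bool"
where
  "RFC DD \<phi> \<longleftrightarrow> (\<forall>C>0. \<forall>\<tau>>0. \<exists>M. \<forall>x. \<forall>d\<in>DD. \<forall>t\<in>{0..\<tau>}.
      norm x \<le> C \<longrightarrow> norm (\<phi> t x d) \<le> M)"

definition UGWA :: "(real \<Rightarrow> 'd) set \<Rightarrow> (real \<Rightarrow> 'x::real_normed_vector \<Rightarrow> (real \<Rightarrow> 'd) \<Rightarrow> 'x) \<Rightarrow> 'x set \<Rightarrow> bool"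
where
  "UGWA DD \<phi> A \<longleftrightarrow> (\<forall>\<epsilon>>0. \<forall>r>0. \<exists>\<tau>. \<forall>x. \<forall>d\<in>DD.
      infdist x A \<le> r \<longrightarrow> (\<exists>t\<in>{0..\<tau>}. infdist (\<phi> t x d) A \<le> \<epsilon>))"

definition K_inf :: "(real \<Rightarrow> real) \<Rightarrow> bool" where
  "K_inf \<gamma> \<longleftrightarrow> continuous_on {0..} \<gamma> \<and> strict_mono_on {0..} \<gamma> \<and> \<gamma> 0 = 0 \<and>
     (\<forall>M. \<exists>s\<ge>0. \<gamma> s > M)"

definition lagrange_stable :: "(real \<Rightarrow> 'd) set \<Rightarrow> (real \<Rightarrow> 'x::real_normed_vector \<Rightarrow> (real \<Rightarrow> 'd) \<Rightarrow> 'x) \<Rightarrow> bool"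
where
  "lagrange_stable DD \<phi> \<longleftrightarrow> (\<exists>B \<sigma> c. bounded B \<and> B \<noteq> {} \<and> K_inf \<sigma> \<and> c > 0 \<and>
      (\<forall>x. \<forall>t\<ge>0. \<forall>d\<in>DD. infdist (\<phi> t x d) B \<le> \<sigma> (infdist x B) + c))"

end

theory Submission imports Defs begin

definition sig :: "(nat \<Rightarrow> real) \<Rightarrow> real \<Rightarrow> real" where
  "sig b s = s + (\<Sum>n<nat \<lceil>s\<rceil>. b n * max 0 (min 1 (s - real n)))"

lemma sig_eq:
  assumes "s \<le> real N"
  shows "sig b s = s + (\<Sum>n<N. b n * max 0 (min 1 (s - real n)))"
proof -
  have sub: "{..<nat \<lceil>s\<rceil>} \<subseteq> {..<N}" using assms by (auto simp: nat_le_iff ceiling_le_iff)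
  have "(\<Sum>n<N. b n * max 0 (min 1 (s - real n))) = (\<Sum>n<nat \<lceil>s\<rceil>. b n * max 0 (min 1 (s - real n)))"
  proof (rule sum.mono_neutral_right[OF _ sub])
    show "\<forall>i\<in>{..<N} - {..<nat \<lceil>s\<rceil>}. b i * max 0 (min 1 (s - real i)) = 0"
      by (auto simp: not_less nat_le_iff ceiling_le_iff)
  qed simp
  then show ?thesis by (simp add: sig_def)
qed

lemma sig_K:
  assumes "\<And>n. b n \<ge> 0"
  shows "K_inf (sig b)"
proof -
  have c: "continuous_on {..<real N} (sig b)" for N
  proof -
    have "continuous_on {..<real N} (\<lambda>s. s + (\<Sum>n<N. b n * max 0 (min 1 (s - real n))))"
      by (intro continuous_intros)
    moreover have "\<And>s. s \<in> {..<real N} \<Longrightarrow> sig b s = s + (\<Sum>n<N. b n * max 0 (min 1 (s - real n)))"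
      by (rule sig_eq) auto
    ultimately show ?thesis using continuous_on_cong by (metis (no_types, lifting))
  qed
  have "continuous_on (\<Union>N. {..<real N}) (sig b)"
    by (rule continuous_on_open_UN) (auto intro: c)
  moreover have "(\<Union>N. {..<real N}) = UNIV"
    by (auto intro: reals_Archimedean2)
  ultimately have cont: "continuous_on {0..} (sig b)" by (metis continuous_on_subset top_greatest)
  have mono: "sig b s < sig b t" if "s < t" for s t
  proof -
    obtain N where N: "t \<le> real N" by (meson real_arch_simple)
    have "(\<Sum>n<N. b n * max 0 (min 1 (s - real n))) \<le> (\<Sum>n<N. b n * max 0 (min 1 (t - real n)))"
      using that assms by (intro sum_mono mult_left_mono) auto
    moreover have "sig b s = s + (\<Sum>n<N. b n * max 0 (min 1 (s - real n)))"
      using that N by (intro sig_eq) auto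
    moreover have "sig b t = t + (\<Sum>n<N. b n * max 0 (min 1 (t - real n)))"
      using that N by (intro sig_eq) auto
    ultimately show ?thesis using that by linarith
  qed
  have ge: "sig b s \<ge> s" if "s \<ge> 0" for s
    using assms by (simp add: sig_def sum_nonneg)
  have z: "sig b 0 = 0" by (simp add: sig_def)
  have u: "\<exists>s\<ge>0. sig b s > M" for M
    using ge[of "max 0 (M+1)"] by (intro exI[where x="max 0 (M+1)"]) auto
  show ?thesis unfolding K_inf_def
    using cont z u mono by (auto simp: strict_mono_on_def)
qed

lemma sig_ge:
  assumes "\<And>n. b n \<ge> 0" "real k + 1 \<le> s"
  shows "b k \<le> sig b s"
proof -
  obtain N where N: "s \<le> real N" by (meson real_arch_simple)
  have kN: "k \<in> {..<N}" using assms N by auto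
  have "b k = b k * max 0 (min 1 (s - real k))" using assms by simp
  also have "\<dots> \<le> (\<Sum>n<N. b n * max 0 (min 1 (s - real n)))"
    by (rule member_le_sum[OF kN]) (use assms in auto)
  finally show ?thesis using N assms by (simp add: sig_eq)
qed

theorem lemma21:
  fixes Dv :: "'d::real_normed_vector set"
    and DD :: "(real \<Rightarrow> 'd) set"
    and \<phi> :: "real \<Rightarrow> 'x::real_normed_vector \<Rightarrow> (real \<Rightarrow> 'd) \<Rightarrow> 'x"
    and A :: "'x set"
  assumes "is_system Dv DD \<phi>"
    and "RFC DD \<phi>"
    and "bounded A" and "A \<noteq> {}"
    and "UGWA DD \<phi> A"
  shows "lagrange_stable DD \<phi>"
proof -
  have shift: "(\<lambda>s. d (t + s)) \<in> DD" if "d \<in> DD" "t \<ge> 0" for d t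
  proof -
    have "(\<lambda>s. d (s + t)) \<in> DD" using assms(1) that unfolding is_system_def by blast
    then show ?thesis by (simp add: add.commute)
  qed
  have phi0: "\<phi> 0 x d = x" for x d using assms(1) unfolding is_system_def by blast
  have semi: "\<phi> h (\<phi> t x d) (\<lambda>s. d (t + s)) = \<phi> (t + h) x d"
    if "d \<in> DD" "t \<ge> 0" "h \<ge> 0" for x d t h
    using assms(1) that unfolding is_system_def by blast
  have rfc: "\<exists>M. \<forall>x. \<forall>d\<in>DD. \<forall>t\<in>{0..\<tau>}. norm x \<le> C \<longrightarrow> norm (\<phi> t x d) \<le> M"
    if "C > 0" "\<tau> > 0" for C \<tau> using assms(2) that unfolding RFC_def by blast
  have ugwa: "\<exists>\<tau>. \<forall>x. \<forall>d\<in>DD. infdist x A \<le> r \<longrightarrow> (\<exists>t\<in>{0..\<tau>}. infdist (\<phi> t x d) A \<le> 1)"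
    if "r > 0" for r using assms(5) that unfolding UGWA_def by (meson zero_less_one)
  obtain R where R: "R > 0" "\<And>a. a \<in> A \<Longrightarrow> norm a \<le> R"
    using assms(3) unfolding bounded_pos by blast
  obtain a0 where a0: "a0 \<in> A" using assms(4) by blast
  have idup: "infdist y A \<le> norm y + R" for y
  proof -
    have "infdist y A \<le> dist y a0" by (rule infdist_le[OF a0])
    also have "\<dots> \<le> norm y + norm a0" by (simp add: dist_norm norm_triangle_ineq4)
    finally show ?thesis using R(2)[OF a0] by linarith
  qed
  have idlow: "norm y - R \<le> infdist y A" for y
  proof -
    have "norm y - R \<le> dist y a" if "a \<in> A" for a
      using R(2)[OF that] norm_triangle_ineq2[of y a] by (simp add: dist_norm)
    then show ?thesis unfolding infdist_notempty[OF assms(4)]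
      by (intro cINF_greatest assms(4)) auto
  qed
  define C where "C = R + 1"
  have C: "C > 0" "\<And>y. infdist y A \<le> 1 \<Longrightarrow> norm y \<le> C"
    using R idlow unfolding C_def by (auto, smt (verit, best) idlow)
  obtain M1 where M1: "\<And>x d t. d \<in> DD \<Longrightarrow> t \<in> {0..1} \<Longrightarrow> norm x \<le> C \<Longrightarrow> norm (\<phi> t x d) \<le> M1"
    using rfc[OF C(1) zero_less_one] by blast
  define r2 where "r2 = max 1 (M1 + R)"
  have r2p: "r2 > 0" unfolding r2_def by simp
  obtain \<tau>2 where t2: "\<And>x d. d \<in> DD \<Longrightarrow> infdist x A \<le> r2 \<Longrightarrow> \<exists>t\<in>{0..\<tau>2}. infdist (\<phi> t x d) A \<le> 1"
    using ugwa[of r2, OF r2p] by blast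
  define T where "T = 1 + max 0 \<tau>2"
  have Tp: "T > 0" unfolding T_def by simp
  obtain M where M: "\<And>x d t. d \<in> DD \<Longrightarrow> t \<in> {0..T} \<Longrightarrow> norm x \<le> C \<Longrightarrow> norm (\<phi> t x d) \<le> M"
    using rfc[OF C(1) Tp] by blast
  have ret: "\<exists>s\<in>{1..T}. infdist (\<phi> s y d) A \<le> 1" if hh: "infdist y A \<le> 1" "d \<in> DD" for y d
  proof -
    have "norm (\<phi> 1 y d) \<le> M1" using M1[OF hh(2), of 1 y] C(2)[OF hh(1)] by auto
    then have "infdist (\<phi> 1 y d) A \<le> r2" using idup[of "\<phi> 1 y d"] unfolding r2_def by linarith
    then obtain t where t: "t \<in> {0..\<tau>2}" "infdist (\<phi> t (\<phi> 1 y d) (\<lambda>s. d (1 + s))) A \<le> 1"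
      using t2[OF shift[OF hh(2), of 1]] by (meson zero_le_one)
    have "\<phi> t (\<phi> 1 y d) (\<lambda>s. d (1 + s)) = \<phi> (1 + t) y d" using semi[OF hh(2)] t(1) by auto
    then show ?thesis using t unfolding T_def by (intro bexI[where x="1+t"]) auto
  qed
  have ind: "\<forall>y d t. infdist y A \<le> 1 \<longrightarrow> d \<in> DD \<longrightarrow> 0 \<le> t \<longrightarrow> t \<le> real n \<longrightarrow> norm (\<phi> t y d) \<le> M" for n :: nat
  proof (induction n)
    case 0
    then show ?case using M C(2) T_def by auto
  next
    case (Suc n)
    show ?case
    proof (intro allI impI)
      fix y d t assume h: "infdist y A \<le> 1" "d \<in> DD" "0 \<le> t" "t \<le> real (Suc n)"
      obtain s where s: "s \<in> {1..T}" "infdist (\<phi> s y d) A \<le> 1" using ret[OF h(1,2)] by blast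
      show "norm (\<phi> t y d) \<le> M"
      proof (cases "t \<le> s")
        case True then show ?thesis using M[OF h(2), of t y] s h C(2) by auto
      next
        case False
        have "\<phi> t y d = \<phi> (t - s) (\<phi> s y d) (\<lambda>u. d (s + u))" using semi[OF h(2), of s "t - s"] s False by auto
        moreover have "norm (\<phi> (t - s) (\<phi> s y d) (\<lambda>u. d (s + u))) \<le> M"
          using Suc.IH shift[OF h(2), of s] s h False by auto
        ultimately show ?thesis by simp
      qed
    qed
  qed
  have inS: "norm (\<phi> t y d) \<le> M" if "infdist y A \<le> 1" "d \<in> DD" "t \<ge> 0" for y d t
    using ind[of "nat \<lceil>t\<rceil>"] that by (meson real_nat_ceiling_ge)
  have main: "\<exists>K. \<forall>x d t. norm x \<le> c \<longrightarrow> d \<in> DD \<longrightarrow> 0 \<le> t \<longrightarrow> norm (\<phi> t x d) \<le> K" for c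
  proof -
    obtain \<tau> where tau: "\<And>x d. d \<in> DD \<Longrightarrow> infdist x A \<le> max 1 (c + R) \<Longrightarrow> \<exists>t\<in>{0..\<tau>}. infdist (\<phi> t x d) A \<le> 1"
      using ugwa[of "max 1 (c + R)"] by (simp only: max_less_iff_conj less_max_iff_disj zero_less_one simp_thms) blast
    have p1: "0 < max 1 c" and p2: "0 < max 1 \<tau>" by auto
    obtain Mx where Mx: "\<And>x d t. d \<in> DD \<Longrightarrow> t \<in> {0..max 1 \<tau>} \<Longrightarrow> norm x \<le> max 1 c \<Longrightarrow> norm (\<phi> t x d) \<le> Mx"
      using rfc[OF p1 p2] by blast
    show ?thesis
    proof (intro exI[where x="max M Mx"] allI impI)
      fix x :: 'x and d and t :: real assume h: "norm x \<le> c" "d \<in> DD" "0 \<le> t"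
      have "infdist x A \<le> max 1 (c + R)" using idup[of x] h by linarith
      then obtain t0 where t0: "t0 \<in> {0..\<tau>}" "infdist (\<phi> t0 x d) A \<le> 1" using tau[OF h(2)] by blast
      show "norm (\<phi> t x d) \<le> max M Mx"
      proof (cases "t \<le> t0")
        case True
        have "t \<in> {0..max 1 \<tau>}" using True t0 h by auto
        moreover have "norm x \<le> max 1 c" using h by auto
        ultimately have "norm (\<phi> t x d) \<le> Mx" using Mx[OF h(2)] by blast
        then show ?thesis by simp
      next
        case False
        have "\<phi> t x d = \<phi> (t - t0) (\<phi> t0 x d) (\<lambda>u. d (t0 + u))" using semi[OF h(2), of t0 "t - t0"] t0 False by auto
        moreover have "norm (\<phi> (t - t0) (\<phi> t0 x d) (\<lambda>u. d (t0 + u))) \<le> M"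
          using inS[OF t0(2) shift[OF h(2)]] t0 False by auto
        ultimately show ?thesis by simp
      qed
    qed
  qed
  then have "\<forall>c. \<exists>K. \<forall>x d t. norm x \<le> c \<longrightarrow> d \<in> DD \<longrightarrow> 0 \<le> t \<longrightarrow> norm (\<phi> t x d) \<le> K" by blast
  then obtain K where K0: "\<forall>c. \<forall>x d t. norm x \<le> c \<longrightarrow> d \<in> DD \<longrightarrow> 0 \<le> t \<longrightarrow> norm (\<phi> t x d) \<le> K c"
    using choice[where Q="\<lambda>c K. \<forall>x d t. norm x \<le> c \<longrightarrow> d \<in> DD \<longrightarrow> 0 \<le> t \<longrightarrow> norm (\<phi> t x d) \<le> K"] by blast
  have K: "\<And>c x d t. norm x \<le> c \<Longrightarrow> d \<in> DD \<Longrightarrow> 0 \<le> t \<Longrightarrow> norm (\<phi> t x d) \<le> K c"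
    using K0 by blast
  define b where "b n = max 0 (K (real n + 2))" for n :: nat
  have b0: "b n \<ge> 0" for n unfolding b_def by simp
  show ?thesis unfolding lagrange_stable_def
  proof (intro exI[where x="{0}"] exI[where x="sig b"] exI[where x="max 1 (K 1)"] conjI allI impI ballI)
    show "K_inf (sig b)" by (rule sig_K[OF b0])
    fix x :: 'x and t :: real and d assume h: "0 \<le> t" "d \<in> DD"
    show "infdist (\<phi> t x d) {0} \<le> sig b (infdist x {0}) + max 1 (K 1)"
    proof (cases "norm x \<le> 1")
      case True
      have "sig b (norm x) \<ge> 0" using b0 by (simp add: sig_def sum_nonneg)
      then show ?thesis using K[OF True h(2,1)] by simp
    next
      case False
      define k where "k = nat (\<lfloor>norm x\<rfloor> - 1)"
      have k1: "real k + 1 \<le> norm x" and k2: "norm x \<le> real k + 2"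
      proof -
        have f1: "1 \<le> \<lfloor>norm x\<rfloor>" using False by (simp add: le_floor_iff)
        have rk: "real k = real_of_int \<lfloor>norm x\<rfloor> - 1" unfolding k_def using f1 by simp
        have "real_of_int \<lfloor>norm x\<rfloor> \<le> norm x" "norm x < real_of_int \<lfloor>norm x\<rfloor> + 1" by linarith+
        then show "real k + 1 \<le> norm x" "norm x \<le> real k + 2" using rk by linarith+
      qed
      have "norm (\<phi> t x d) \<le> b k" using K[OF k2 h(2,1)] unfolding b_def by (simp add: add.commute)
      also have "\<dots> \<le> sig b (norm x)" by (rule sig_ge[OF b0 k1])
      finally show ?thesis by simp
    qed
  qed simp_all
qed

end
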